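(* Suppose all speeds are integer multiples of a common factor $\epsilon\in(0,1]$ and the protocol is run with $\alpha=4s_{\max}/\epsilon$. If the system is in a state $x$ that is not a Nash equilibrium, then for every round $k\ge0$ \[ \mathbb{E}\big[\Psi_1(X^k)-\Psi_1(X^{k+1})\,\big|\,X^k=x\big] \ge \frac{\epsilon^2}{8\,\Delta\, s_{\max}^3}. \]
   Context: $G=(V,E)$ is an undirected graph on $n$ vertices (processors) with maximum degree $\Delta$; $\deg(i)$ is the degree and $d_{ij}=\max\{\deg(i),\deg(j)\}$. Processor $i$ has speed $s_i=n_i\epsilon$ with $n_i$ a positive integer, speeds scaled so that the smallest speed is $1$; $s_{\max}=\max_i s_i$, $\mathcal{S}=\sum_i s_i$. There are $m$ unit tasks; in state $x$, $w_i(x)$ is the number of tasks on $i$ and $\ell_i(x)=w_i(x)/s_i$. Protocol: in each round every task, independently, with $i$ its current processor, chooses a uniformly random neighbor $j$; if $\ell_i-\ell_j>1/s_j$ it moves to $j$ with probability $\frac{\deg(i)}{d_{ij}}\cdot\frac{\ell_i-\ell_j}{\alpha(1/s_i+1/s_j)w_i}$, otherwise stays. $X^k$ is the state after $k$ rounds. $\Psi_1(x)=\sum_i \frac{w_i(x)(w_i(x)+1)}{s_i}-\frac{m^2}{\mathcal{S}}-\frac{mn}{\mathcal{S}}-\frac{n^2}{4\mathcal{S}}+\frac14\sum_i\frac{1}{s_i}$. A state is a Nash equilibrium if $\ell_i-\ell_j\le 1/s_j$ for every ordered pair $(i,j)$ of adjacent processors. *)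

theory Defs
  imports "HOL-Probability.Probability"
begin

text \<open>Graph: finite vertex set V, symmetric irreflexive adjacency E (edges inside V).
 States: load vectors x :: 'v => nat (number of unit tasks on each processor).\<close>

definition nbrs :: "'v set \<Rightarrow> ('v \<Rightarrow> 'v \<Rightarrow> bool) \<Rightarrow> 'v \<Rightarrow> 'v set" where
  "nbrs V E i = {j \<in> V. E i j}"

definition deg :: "'v set \<Rightarrow> ('v \<Rightarrow> 'v \<Rightarrow> bool) \<Rightarrow> 'v \<Rightarrow> nat" where
  "deg V E i = card (nbrs V E i)"

definition maxdeg :: "'v set \<Rightarrow> ('v \<Rightarrow> 'v \<Rightarrow> bool) \<Rightarrow> nat" where
  "maxdeg V E = Max (deg V E ` V)"

definition dmax :: "'v set \<Rightarrow> ('v \<Rightarrow> 'v \<Rightarrow> bool) \<Rightarrow> 'v \<Rightarrow> 'v \<Rightarrow> nat" where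
  "dmax V E i j = max (deg V E i) (deg V E j)"

definition load :: "('v \<Rightarrow> real) \<Rightarrow> ('v \<Rightarrow> nat) \<Rightarrow> 'v \<Rightarrow> real" where
  "load s x i = real (x i) / s i"

definition smax :: "'v set \<Rightarrow> ('v \<Rightarrow> real) \<Rightarrow> real" where
  "smax V s = Max (s ` V)"

definition move_prob ::
  "'v set \<Rightarrow> ('v \<Rightarrow> 'v \<Rightarrow> bool) \<Rightarrow> ('v \<Rightarrow> real) \<Rightarrow> real \<Rightarrow> ('v \<Rightarrow> nat) \<Rightarrow> 'v \<Rightarrow> 'v \<Rightarrow> real" where
  "move_prob V E s \<alpha> x i j =
     real (deg V E i) / real (dmax V E i j) *
     ((load s x i - load s x j) / (\<alpha> * (1 / s i + 1 / s j) * real (x i)))"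

definition task_move ::
  "'v set \<Rightarrow> ('v \<Rightarrow> 'v \<Rightarrow> bool) \<Rightarrow> ('v \<Rightarrow> real) \<Rightarrow> real \<Rightarrow> ('v \<Rightarrow> nat) \<Rightarrow> 'v \<Rightarrow> 'v pmf" where
  "task_move V E s \<alpha> x i =
     (if nbrs V E i = {} then return_pmf i
      else bind_pmf (pmf_of_set (nbrs V E i)) (\<lambda>j.
        if load s x i - load s x j > 1 / s j
        then map_pmf (\<lambda>b. if b then j else i) (bernoulli_pmf (move_prob V E s \<alpha> x i j))
        else return_pmf i))"

text \<open>The tasks in state x: task t on processor i, for t < x i.\<close>
definition tasks :: "'v set \<Rightarrow> ('v \<Rightarrow> nat) \<Rightarrow> ('v \<times> nat) set" where
  "tasks V x = Sigma V (\<lambda>i. {..<x i})"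

definition round_step ::
  "'v set \<Rightarrow> ('v \<Rightarrow> 'v \<Rightarrow> bool) \<Rightarrow> ('v \<Rightarrow> real) \<Rightarrow> real \<Rightarrow> ('v \<Rightarrow> nat) \<Rightarrow> ('v \<Rightarrow> nat) pmf" where
  "round_step V E s \<alpha> x =
     map_pmf (\<lambda>d. \<lambda>j. card {p \<in> tasks V x. d p = j})
       (Pi_pmf (tasks V x) undefined (\<lambda>p. task_move V E s \<alpha> x (fst p)))"

primrec proc ::
  "'v set \<Rightarrow> ('v \<Rightarrow> 'v \<Rightarrow> bool) \<Rightarrow> ('v \<Rightarrow> real) \<Rightarrow> real \<Rightarrow> ('v \<Rightarrow> nat) pmf \<Rightarrow> nat \<Rightarrow> ('v \<Rightarrow> nat) pmf" where
  "proc V E s \<alpha> \<mu>0 0 = \<mu>0"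
| "proc V E s \<alpha> \<mu>0 (Suc k) = bind_pmf (proc V E s \<alpha> \<mu>0 k) (round_step V E s \<alpha>)"

definition joint ::
  "'v set \<Rightarrow> ('v \<Rightarrow> 'v \<Rightarrow> bool) \<Rightarrow> ('v \<Rightarrow> real) \<Rightarrow> real \<Rightarrow> ('v \<Rightarrow> nat) pmf \<Rightarrow> nat \<Rightarrow> (('v \<Rightarrow> nat) \<times> ('v \<Rightarrow> nat)) pmf" where
  "joint V E s \<alpha> \<mu>0 k =
     bind_pmf (proc V E s \<alpha> \<mu>0 k) (\<lambda>x. map_pmf (\<lambda>y. (x, y)) (round_step V E s \<alpha> x))"

definition Psi1 :: "'v set \<Rightarrow> ('v \<Rightarrow> real) \<Rightarrow> ('v \<Rightarrow> nat) \<Rightarrow> real" where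
  "Psi1 V s x =
    (let m = real (\<Sum>i\<in>V. x i); n = real (card V); S = (\<Sum>i\<in>V. s i) in
     (\<Sum>i\<in>V. real (x i) * (real (x i) + 1) / s i) - m^2 / S - m * n / S - n^2 / (4 * S)
     + (1/4) * (\<Sum>i\<in>V. 1 / s i))"

definition is_NE :: "('v \<Rightarrow> 'v \<Rightarrow> bool) \<Rightarrow> ('v \<Rightarrow> real) \<Rightarrow> ('v \<Rightarrow> nat) \<Rightarrow> bool" where
  "is_NE E s x \<longleftrightarrow> (\<forall>i j. E i j \<longrightarrow> load s x i - load s x j \<le> 1 / s j)"

end

theory Submission
  imports Defs
begin


lemma pmf_map_Pair: "pmf (map_pmf (\<lambda>y. (x', y)) M) (a, b) = (if x' = a then pmf M b else 0)"
proof (cases "x' = a")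
  case True
  have i: "inj (\<lambda>y. (a, y))" by (auto simp: inj_def)
  show ?thesis using True pmf_map_inj'[OF i, of M b] by simp
next
  case False
  then have "(a,b) \<notin> set_pmf (map_pmf (\<lambda>y. (x', y)) M)" by auto
  then show ?thesis using False by (simp add: set_pmf_iff del: set_map_pmf)
qed

lemma pmf_joint_gen: "pmf (bind_pmf \<mu> (\<lambda>x. map_pmf (\<lambda>y. (x, y)) (R x))) (a, b) = pmf \<mu> a * pmf (R a) b"
proof -
  have "pmf (bind_pmf \<mu> (\<lambda>x. map_pmf (\<lambda>y. (x, y)) (R x))) (a, b)
     = (\<integral>x'. indicator {a} x' * pmf (R a) b \<partial>measure_pmf \<mu>)"
    unfolding pmf_bind by (intro Bochner_Integration.integral_cong) (auto simp: pmf_map_Pair)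
  also have "\<dots> = pmf \<mu> a * pmf (R a) b"
    by (simp add: pmf.rep_eq measure_pmf.emeasure_eq_measure)
  finally show ?thesis .
qed

lemma cond_joint_gen:
  assumes "x \<in> set_pmf \<mu>"
  shows "cond_pmf (bind_pmf \<mu> (\<lambda>x. map_pmf (\<lambda>y. (x, y)) (R x))) {p. fst p = x} = map_pmf (\<lambda>y. (x, y)) (R x)"
proof -
  let ?J = "bind_pmf \<mu> (\<lambda>x. map_pmf (\<lambda>y. (x, y)) (R x))"
  have mf: "map_pmf fst ?J = \<mu>"
    by (simp add: map_bind_pmf pmf.map_comp o_def bind_return_pmf')
  have "measure_pmf.prob ?J {p. fst p = x} = measure_pmf.prob (map_pmf fst ?J) {x}"
    by (simp add: measure_map_pmf vimage_def)
  also have "\<dots> = pmf \<mu> x" using mf by (simp add: measure_pmf_single)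
  finally have m: "measure_pmf.prob ?J {p. fst p = x} = pmf \<mu> x" .
  have px: "pmf \<mu> x > 0" using assms by (simp add: pmf_positive)
  have ne: "set_pmf ?J \<inter> {p. fst p = x} \<noteq> {}"
  proof -
    obtain y where "y \<in> set_pmf (R x)" using set_pmf_not_empty[of "R x"] by blast
    then have "(x,y) \<in> set_pmf ?J" using assms by auto
    then show ?thesis by (metis (mono_tags, lifting) IntI empty_iff fst_conv mem_Collect_eq)
  qed
  show ?thesis
  proof (rule pmf_eqI)
    fix p
    show "pmf (cond_pmf ?J {p. fst p = x}) p = pmf (map_pmf (\<lambda>y. (x, y)) (R x)) p"
    proof (cases p)
      case (Pair a b)
      show ?thesis
        unfolding Pair pmf_cond[OF ne] m using px by (auto simp: pmf_joint_gen pmf_map_Pair)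
    qed
  qed
qed


lemma card_filter_sum: "finite T \<Longrightarrow> real (card {p\<in>T. P p}) = (\<Sum>p\<in>T. if P p then 1 else 0)"
  by (simp add: sum.If_cases Int_def)

lemma E_ind: "measure_pmf.expectation M (\<lambda>v. if v = j then 1 else 0 :: real) = pmf M j"
proof -
  have "(\<lambda>v. if v = j then 1 else 0 :: real) = indicator {j}" by (auto simp: indicator_def fun_eq_iff)
  then show ?thesis by (simp add: measure_pmf_single)
qed

lemma E_ind_Pi:
  assumes "finite T" "p \<in> T"
  shows "measure_pmf.expectation (Pi_pmf T dflt M) (\<lambda>d. if d p = j then 1 else 0 :: real) = pmf (M p) j"
proof -
  have "measure_pmf.expectation (Pi_pmf T dflt M) (\<lambda>d. if d p = j then 1 else 0 :: real)
      = measure_pmf.expectation (map_pmf (\<lambda>d. d p) (Pi_pmf T dflt M)) (\<lambda>v. if v = j then 1 else 0 :: real)"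
    by simp
  also have "\<dots> = measure_pmf.expectation (M p) (\<lambda>v. if v = j then 1 else 0 :: real)"
    using assms by (simp add: Pi_pmf_component)
  also have "\<dots> = pmf (M p) j" by (rule E_ind)
  finally show ?thesis .
qed

lemma E_ind2_Pi:
  assumes "finite T" "p \<in> T" "q \<in> T" "p \<noteq> q"
  shows "measure_pmf.expectation (Pi_pmf T dflt M)
     (\<lambda>d. (if d p = j then 1 else 0) * (if d q = j then 1 else 0 :: real)) = pmf (M p) j * pmf (M q) j"
proof -
  define f where "f = (\<lambda>r v. if r = p \<or> r = q then (if v = j then 1 else 0) else 1 :: real)"
  have pr: "(\<Prod>r\<in>T. f r (d r)) = (if d p = j then 1 else 0) * (if d q = j then 1 else 0)" for d
  proof -
    have "(\<Prod>r\<in>T. f r (d r)) = (\<Prod>r\<in>{p,q}. f r (d r))"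
      using assms by (intro prod.mono_neutral_right) (auto simp: f_def)
    then show ?thesis using assms by (simp add: f_def)
  qed
  have pr2: "(\<Prod>r\<in>T. measure_pmf.expectation (M r) (f r)) = (\<Prod>r\<in>{p,q}. measure_pmf.expectation (M r) (f r))"
    using assms by (intro prod.mono_neutral_right) (auto simp: f_def)
  have ei: "measure_pmf.expectation (M r) (\<lambda>v. if v = j then 1 else 0 :: real) = pmf (M r) j" for r
    by (rule E_ind)
  have "measure_pmf.expectation (Pi_pmf T dflt M)
     (\<lambda>d. (if d p = j then 1 else 0) * (if d q = j then 1 else 0 :: real))
     = measure_pmf.expectation (Pi_pmf T dflt M) (\<lambda>d. \<Prod>r\<in>T. f r (d r))"
    by (simp add: pr)
  also have "\<dots> = (\<Prod>r\<in>T. measure_pmf.expectation (M r) (f r))"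
    using assms(1) by (intro expectation_prod_Pi_pmf) (auto simp: f_def intro: measure_pmf.integrable_const_bound[where B=1])
  also have "\<dots> = pmf (M p) j * pmf (M q) j"
    unfolding pr2 using assms by (simp add: f_def ei)
  finally show ?thesis .
qed

lemma count_E1:
  assumes "finite T"
  shows "measure_pmf.expectation (Pi_pmf T dflt M) (\<lambda>d. real (card {p\<in>T. d p = j})) = (\<Sum>p\<in>T. pmf (M p) j)"
proof -
  have "measure_pmf.expectation (Pi_pmf T dflt M) (\<lambda>d. real (card {p\<in>T. d p = j}))
     = measure_pmf.expectation (Pi_pmf T dflt M) (\<lambda>d. \<Sum>p\<in>T. if d p = j then 1 else 0 :: real)"
    using assms by (simp add: card_filter_sum)
  also have "\<dots> = (\<Sum>p\<in>T. measure_pmf.expectation (Pi_pmf T dflt M) (\<lambda>d. if d p = j then 1 else 0 :: real))"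
    by (intro Bochner_Integration.integral_sum measure_pmf.integrable_const_bound[where B=1]) auto
  also have "\<dots> = (\<Sum>p\<in>T. pmf (M p) j)"
    using assms by (intro sum.cong) (auto simp: E_ind_Pi)
  finally show ?thesis .
qed

lemma count_E2:
  fixes T :: "'a set" and M :: "'a \<Rightarrow> 'b pmf"
  assumes "finite T"
  shows "measure_pmf.expectation (Pi_pmf T dflt M) (\<lambda>d. (real (card {p\<in>T. d p = j}))^2)
     = (\<Sum>p\<in>T. pmf (M p) j)^2 + (\<Sum>p\<in>T. pmf (M p) j) - (\<Sum>p\<in>T. (pmf (M p) j)^2)"
proof -
  define I where "I = (\<lambda>(p::'a) (d::'a \<Rightarrow> 'b). if d p = j then 1 else 0 :: real)"
  define a where "a = (\<lambda>p::'a. pmf (M p) j)"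
  have "measure_pmf.expectation (Pi_pmf T dflt M) (\<lambda>d. (real (card {p\<in>T. d p = j}))^2)
     = measure_pmf.expectation (Pi_pmf T dflt M) (\<lambda>d. \<Sum>p\<in>T. \<Sum>q\<in>T. I p d * I q d)"
    using assms by (simp add: card_filter_sum power2_eq_square sum_product I_def)
  also have "\<dots> = (\<Sum>p\<in>T. \<Sum>q\<in>T. measure_pmf.expectation (Pi_pmf T dflt M) (\<lambda>d. I p d * I q d))"
  proof -
    have int: "integrable (measure_pmf (Pi_pmf T dflt M)) (\<lambda>d. I p d * I q d)" for p q
      by (intro measure_pmf.integrable_const_bound[where B=1]) (auto simp: I_def)
    have "measure_pmf.expectation (Pi_pmf T dflt M) (\<lambda>d. \<Sum>p\<in>T. \<Sum>q\<in>T. I p d * I q d)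
       = (\<Sum>p\<in>T. measure_pmf.expectation (Pi_pmf T dflt M) (\<lambda>d. \<Sum>q\<in>T. I p d * I q d))"
      by (intro Bochner_Integration.integral_sum Bochner_Integration.integrable_sum int)
    also have "\<dots> = (\<Sum>p\<in>T. \<Sum>q\<in>T. measure_pmf.expectation (Pi_pmf T dflt M) (\<lambda>d. I p d * I q d))"
      by (intro sum.cong refl Bochner_Integration.integral_sum int)
    finally show ?thesis .
  qed
  also have "\<dots> = (\<Sum>p\<in>T. \<Sum>q\<in>T. if p = q then a p else a p * a q)"
  proof (intro sum.cong refl)
    fix p q assume pq: "p \<in> T" "q \<in> T"
    show "measure_pmf.expectation (Pi_pmf T dflt M) (\<lambda>d. I p d * I q d) = (if p = q then a p else a p * a q)"
    proof (cases "p = q")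
      case True
      have "(\<lambda>d. I p d * I q d) = (\<lambda>d. if d p = j then 1 else 0)" using True by (auto simp: I_def fun_eq_iff)
      then show ?thesis using True pq assms by (simp add: E_ind_Pi a_def)
    next
      case False
      then show ?thesis using pq assms E_ind2_Pi[OF assms pq False] by (simp add: I_def a_def)
    qed
  qed
  also have "\<dots> = (\<Sum>p\<in>T. \<Sum>q\<in>T. a p * a q) + (\<Sum>p\<in>T. a p - (a p)^2)"
  proof -
    have "(\<Sum>q\<in>T. if p = q then a p else a p * a q) = (\<Sum>q\<in>T. a p * a q) + (a p - (a p)^2)" if "p \<in> T" for p
    proof -
      have "(\<Sum>q\<in>T. if p = q then a p else a p * a q) = (\<Sum>q\<in>T. a p * a q + (if p = q then a p - (a p)^2 else 0))"
        by (intro sum.cong) (auto simp: power2_eq_square)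
      also have "\<dots> = (\<Sum>q\<in>T. a p * a q) + (a p - (a p)^2)"
        using that assms by (simp add: sum.distrib)
      finally show ?thesis .
    qed
    then show ?thesis by (simp add: sum.distrib)
  qed
  also have "\<dots> = (\<Sum>p\<in>T. pmf (M p) j)^2 + (\<Sum>p\<in>T. pmf (M p) j) - (\<Sum>p\<in>T. (pmf (M p) j)^2)"
    by (simp add: a_def power2_eq_square sum_product sum_subtractf)
  finally show ?thesis .
qed


definition act :: "('v \<Rightarrow> 'v \<Rightarrow> bool) \<Rightarrow> ('v \<Rightarrow> real) \<Rightarrow> ('v \<Rightarrow> nat) \<Rightarrow> 'v \<Rightarrow> 'v \<Rightarrow> bool" where
  "act E s x i j \<longleftrightarrow> E i j \<and> load s x i - load s x j > 1 / s j"

definition gf :: "'v set \<Rightarrow> ('v \<Rightarrow> 'v \<Rightarrow> bool) \<Rightarrow> ('v \<Rightarrow> real) \<Rightarrow> real \<Rightarrow> ('v \<Rightarrow> nat) \<Rightarrow> 'v \<Rightarrow> 'v \<Rightarrow> real" where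
  "gf V E s \<alpha> x i j = (if act E s x i j then
     (load s x i - load s x j) / (\<alpha> * real (dmax V E i j) * (1 / s i + 1 / s j)) else 0)"

locale lb =
  fixes V :: "'v set" and E :: "'v \<Rightarrow> 'v \<Rightarrow> bool" and s :: "'v \<Rightarrow> real"
    and \<epsilon> :: real and x :: "'v \<Rightarrow> nat"
  assumes finV: "finite V"
    and Esym: "\<And>i j. E i j \<Longrightarrow> E j i"
    and Eirr: "\<And>i. \<not> E i i"
    and EV: "\<And>i j. E i j \<Longrightarrow> i \<in> V \<and> j \<in> V"
    and eps: "0 < \<epsilon>" "\<epsilon> \<le> 1"
    and speeds: "\<forall>i\<in>V. \<exists>n::nat. 0 < n \<and> s i = real n * \<epsilon>"
    and minspeed: "(\<exists>i\<in>V. s i = 1) \<and> (\<forall>i\<in>V. 1 \<le> s i)"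
begin

abbreviation "al \<equiv> 4 * smax V s / \<epsilon>"
abbreviation "g \<equiv> gf V E s al x"
abbreviation "Q i j \<equiv> pmf (task_move V E s al x i) j"

lemma Vne: "V \<noteq> {}" using minspeed by auto

lemma s_ge1: "i \<in> V \<Longrightarrow> 1 \<le> s i" using minspeed by auto
lemma s_pos: "i \<in> V \<Longrightarrow> 0 < s i" using s_ge1 by fastforce
lemma s_le_smax: "i \<in> V \<Longrightarrow> s i \<le> smax V s"
  unfolding smax_def using finV by auto
lemma smax_ge1: "1 \<le> smax V s"
  using minspeed s_le_smax by fastforce
lemma al_ge4: "4 \<le> al"
proof -
  have "4 * 1 \<le> 4 * smax V s" using smax_ge1 by simp
  also have "\<dots> \<le> 4 * smax V s / \<epsilon>" using eps smax_ge1 by (simp add: le_divide_eq)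
  finally show ?thesis by simp
qed

lemma nbrs_fin: "finite (nbrs V E i)" using finV by (simp add: nbrs_def)
lemma nbrs_sub: "nbrs V E i \<subseteq> V" by (auto simp: nbrs_def)
lemma deg_pos: "E i j \<Longrightarrow> 0 < deg V E i"
  unfolding deg_def using nbrs_fin EV by (auto simp: nbrs_def card_gt_0_iff)
lemma deg_le_maxdeg: "i \<in> V \<Longrightarrow> deg V E i \<le> maxdeg V E"
  unfolding maxdeg_def using finV by auto
lemma dmax_le: "i \<in> V \<Longrightarrow> j \<in> V \<Longrightarrow> dmax V E i j \<le> maxdeg V E"
  unfolding dmax_def using deg_le_maxdeg by auto

lemma load_nonneg: "i \<in> V \<Longrightarrow> 0 \<le> load s x i"
  using s_pos[of i] by (simp add: load_def)

lemma act_E: "act E s x i j \<Longrightarrow> E i j" by (simp add: act_def)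
lemma act_xpos: assumes "act E s x i j" shows "0 < x i"
proof (rule ccontr)
  assume "\<not> 0 < x i"
  then have "x i = 0" by simp
  moreover have "j \<in> V" using act_E[OF assms] EV by blast
  ultimately have "load s x i = 0" "0 \<le> load s x j" "0 < 1 / s j"
    using load_nonneg[of j] s_pos[of j] by (auto simp: load_def)
  moreover have "load s x i - load s x j > 1 / s j" using assms by (simp add: act_def)
  ultimately show False by linarith
qed

lemma act_diff_pos: assumes a: "act E s x i j" shows "0 < load s x i - load s x j"
proof -
  have "j \<in> V" using act_E[OF a] EV by blast
  then have "0 < 1 / s j" using s_pos[of j] by simp
  moreover have "load s x i - load s x j > 1 / s j" using a by (simp add: act_def)
  ultimately show ?thesis by linarith
qed

lemma move_prob_01:
  assumes "act E s x i j"
  shows "0 \<le> move_prob V E s al x i j" "move_prob V E s al x i j \<le> 1"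
proof -
  have ij: "i \<in> V" "j \<in> V" using act_E[OF assms] EV by auto
  define D where "D = load s x i - load s x j"
  have Dpos: "0 < D" using act_diff_pos[OF assms] D_def by simp
  have xpos: "0 < real (x i)" using act_xpos[OF assms] by simp
  have dpos: "0 < deg V E i" using deg_pos act_E[OF assms] by blast
  have dd: "real (deg V E i) \<le> real (dmax V E i j)" by (simp add: dmax_def)
  have dmpos: "0 < real (dmax V E i j)" using dpos dd by linarith
  have r01: "0 < real (deg V E i) / real (dmax V E i j)" "real (deg V E i) / real (dmax V E i j) \<le> 1"
    using dpos dd dmpos by (auto simp: divide_le_eq_1)
  have sp: "0 < 1 / s i + 1 / s j" using s_pos ij by (simp add: add_pos_pos)
  have den: "0 < al * (1 / s i + 1 / s j) * real (x i)"
  proof -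
    have "0 < al" using al_ge4 by linarith
    then show ?thesis using sp xpos by (intro mult_pos_pos) auto
  qed
  have Dle: "D \<le> real (x i) / s i" using load_nonneg[OF ij(2)] by (simp add: D_def load_def)
  have "real (x i) / s i \<le> al * (1 / s i + 1 / s j) * real (x i)"
  proof -
    have "real (x i) / s i = 1 * (1 / s i) * real (x i)" by simp
    also have "\<dots> \<le> al * (1 / s i + 1 / s j) * real (x i)"
      using al_ge4 s_pos[OF ij(1)] s_pos[OF ij(2)] xpos by (intro mult_right_mono mult_mono) auto
    finally show ?thesis .
  qed
  have q1: "D / (al * (1 / s i + 1 / s j) * real (x i)) \<le> 1"
    using Dle \<open>real (x i) / s i \<le> al * (1 / s i + 1 / s j) * real (x i)\<close>
    by (subst divide_le_eq_1_pos[OF den]) linarith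
  have q0: "0 \<le> D / (al * (1 / s i + 1 / s j) * real (x i))" using Dpos den by (intro divide_nonneg_pos) auto
  show "0 \<le> move_prob V E s al x i j" unfolding move_prob_def D_def[symmetric]
    by (rule mult_nonneg_nonneg[OF _ q0]) (use r01 in linarith)
  show "move_prob V E s al x i j \<le> 1" unfolding move_prob_def D_def[symmetric]
    by (rule mult_le_one[OF r01(2) q0 q1])
qed

lemma set_task_move: assumes iV: "i \<in> V" shows "set_pmf (task_move V E s al x i) \<subseteq> V"
proof (cases "nbrs V E i = {}")
  case True
  then show ?thesis using iV by (simp add: task_move_def)
next
  case False
  have sub: "set_pmf (if load s x i - load s x k > 1 / s k
        then map_pmf (\<lambda>b. if b then k else i) (bernoulli_pmf (move_prob V E s al x i k))
        else return_pmf i) \<subseteq> V" if k: "k \<in> nbrs V E i" for k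
  proof -
    have "k \<in> V" using k nbrs_sub by blast
    then show ?thesis using iV by auto
  qed
  have "set_pmf (task_move V E s al x i) = (\<Union>k\<in>nbrs V E i. set_pmf (if load s x i - load s x k > 1 / s k
        then map_pmf (\<lambda>b. if b then k else i) (bernoulli_pmf (move_prob V E s al x i k))
        else return_pmf i))"
    using False nbrs_fin by (simp add: task_move_def set_pmf_of_set)
  then show ?thesis using sub by blast
qed

lemma sumQ: "i \<in> V \<Longrightarrow> (\<Sum>j\<in>V. Q i j) = 1"
  using finV set_task_move by (intro sum_pmf_eq_1) auto

lemma xQ: assumes iV: "i \<in> V" and ji: "j \<noteq> i"
  shows "real (x i) * Q i j = g i j"
proof (cases "nbrs V E i = {}")
  case True
  have "\<not> act E s x i j"
  proof
    assume "act E s x i j"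
    then have "E i j" by (rule act_E)
    then have "j \<in> nbrs V E i" using EV by (auto simp: nbrs_def)
    then show False using True by simp
  qed
  then show ?thesis using True ji by (simp add: task_move_def gf_def)
next
  case False
  define N where "N = nbrs V E i"
  define f where "f = (\<lambda>k. if load s x i - load s x k > 1 / s k
        then map_pmf (\<lambda>b. if b then k else i) (bernoulli_pmf (move_prob V E s al x i k))
        else return_pmf i)"
  have tm: "task_move V E s al x i = bind_pmf (pmf_of_set N) f"
    using False by (simp add: task_move_def N_def f_def)
  have pf: "pmf (f k) j = (if k = j \<and> act E s x i j then move_prob V E s al x i j else 0)" if k: "k \<in> N" for k
  proof -
    have Eik: "E i k" using k by (simp add: N_def nbrs_def)
    have ki: "k \<noteq> i" using Eik Eirr by blast
    show ?thesis
    proof (cases "load s x i - load s x k > 1 / s k")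
      case True
      have ak: "act E s x i k" using True Eik by (simp add: act_def)
      have "pmf (f k) j = measure_pmf.prob (bernoulli_pmf (move_prob V E s al x i k)) ((\<lambda>b. if b then k else i) -` {j})"
        using True by (simp add: f_def pmf_map)
      also have "\<dots> = (if k = j then move_prob V E s al x i k else 0)"
      proof (cases "k = j")
        case True
        then have "(\<lambda>b. if b then k else i) -` {j} = {True}" using ki by (auto split: if_splits)
        then show ?thesis using True move_prob_01[OF ak] by (simp add: measure_pmf_single)
      next
        case False
        then have "(\<lambda>b. if b then k else i) -` {j} = {}" using ji by (auto split: if_splits)
        then show ?thesis using False by simp
      qed
      finally show ?thesis using ak by auto
    next
      case False
      then have "\<not> act E s x i k" by (simp add: act_def)
      then show ?thesis using False ji by (auto simp: f_def)
    qed
  qed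
  have NF: "finite N" "N \<noteq> {}" using nbrs_fin False by (auto simp: N_def)
  have cN: "card N = deg V E i" by (simp add: N_def deg_def)
  have "Q i j = (\<Sum>k\<in>N. pmf (f k) j) / real (card N)"
    unfolding tm by (rule pmf_bind_pmf_of_set[OF NF(2) NF(1)])
  also have "(\<Sum>k\<in>N. pmf (f k) j) = (\<Sum>k\<in>N. (if k = j \<and> act E s x i j then move_prob V E s al x i j else 0))"
    using pf by (intro sum.cong) auto
  also have "\<dots> = (if act E s x i j then move_prob V E s al x i j else 0)"
  proof (cases "act E s x i j")
    case True
    then have "j \<in> N" using act_E[OF True] EV by (auto simp: N_def nbrs_def)
    then show ?thesis using True NF(1) by (simp add: sum.delta)
  qed simp
  finally have Qe: "Q i j = (if act E s x i j then move_prob V E s al x i j else 0) / real (deg V E i)"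
    using cN by simp
  show ?thesis
  proof (cases "act E s x i j")
    case True
    have xpos: "0 < real (x i)" using act_xpos[OF True] by simp
    have dpos: "0 < real (deg V E i)" using deg_pos[OF act_E[OF True]] by simp
    have "real (x i) * Q i j = real (x i) * (real (deg V E i) / real (dmax V E i j) *
     ((load s x i - load s x j) / (al * (1 / s i + 1 / s j) * real (x i)))) / real (deg V E i)"
      using Qe True by (simp add: move_prob_def)
    also have "\<dots> = (load s x i - load s x j) / (al * real (dmax V E i j) * (1 / s i + 1 / s j))"
    proof -
      have "X * (d / m * (D / (A * S * X))) / d = D / (A * m * S)" if "X \<noteq> 0" "d \<noteq> 0" for X d m D A S :: real
        using that by (simp add: field_simps)
      then show ?thesis using xpos dpos by simp
    qed
    finally show ?thesis using True by (simp add: gf_def)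
  next
    case False
    then show ?thesis using Qe by (simp add: gf_def)
  qed
qed

abbreviation "T \<equiv> tasks V x"
abbreviation "MM \<equiv> (\<lambda>p. task_move V E s al x (fst p))"
abbreviation "PP \<equiv> Pi_pmf T undefined MM"

lemma finT: "finite T" using finV by (simp add: tasks_def)
lemma cardT: "card T = (\<Sum>i\<in>V. x i)" using finV by (simp add: tasks_def card_SigmaI)
lemma fstT: "p \<in> T \<Longrightarrow> fst p \<in> V" by (auto simp: tasks_def)

lemma round_eq: "round_step V E s al x = map_pmf (\<lambda>d j. card {p \<in> T. d p = j}) PP"
  unfolding round_step_def by (rule refl)

lemma PP_range: assumes "d \<in> set_pmf PP" "p \<in> T" shows "d p \<in> V"
proof -
  have "d \<in> PiE_dflt T undefined (set_pmf \<circ> MM)" using assms(1) set_Pi_pmf[OF finT, of undefined MM] by simp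
  then have "d p \<in> (set_pmf \<circ> MM) p" using assms(2) unfolding PiE_dflt_def by blast
  then have "d p \<in> set_pmf (MM p)" by simp
  then show ?thesis using set_task_move[OF fstT[OF assms(2)]] by blast
qed

lemma PP_fin: "finite (set_pmf PP)"
proof -
  have "finite (PiE_dflt T undefined (set_pmf \<circ> MM))"
  proof (rule finite_PiE_dflt[OF finT])
    fix p assume "p \<in> T"
    show "finite ((set_pmf \<circ> MM) p)" unfolding o_def
      by (rule finite_subset[OF set_task_move[OF fstT[OF \<open>p \<in> T\<close>]] finV])
  qed
  then show ?thesis using set_Pi_pmf[OF finT, of undefined MM] by simp
qed

lemma sum_cnt: assumes "d \<in> set_pmf PP"
  shows "(\<Sum>j\<in>V. real (card {p \<in> T. d p = j})) = (\<Sum>i\<in>V. real (x i))"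
proof -
  have "(\<Sum>j\<in>V. real (card {p \<in> T. d p = j})) = (\<Sum>j\<in>V. \<Sum>p\<in>T. if d p = j then 1 else 0)"
    by (intro sum.cong refl card_filter_sum finT)
  also have "\<dots> = (\<Sum>p\<in>T. \<Sum>j\<in>V. if d p = j then 1 else 0)" by (rule sum.swap)
  also have "\<dots> = (\<Sum>p\<in>T. 1)"
  proof (intro sum.cong refl)
    fix p assume "p \<in> T"
    then have "d p \<in> V" by (rule PP_range[OF assms])
    then show "(\<Sum>j\<in>V. if d p = j then 1 else 0) = (1::real)" using finV by (simp add: sum.delta)
  qed
  also have "\<dots> = real (card T)" by simp
  also have "\<dots> = (\<Sum>i\<in>V. real (x i))" unfolding cardT by simp
  finally show ?thesis .
qed

lemma sumT: "(\<Sum>p\<in>T. F (fst p)) = (\<Sum>i\<in>V. real (x i) * F i)"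
proof -
  have "(\<Sum>i\<in>V. \<Sum>t\<in>{..<x i}. F i) = (\<Sum>(i,t)\<in>Sigma V (\<lambda>i. {..<x i}). F i)"
    by (rule sum.Sigma) (use finV in auto)
  also have "\<dots> = (\<Sum>p\<in>T. F (fst p))" unfolding tasks_def by (intro sum.cong refl) auto
  finally show ?thesis by simp
qed

definition "Phi z = (\<Sum>i\<in>V. real (z i) * (real (z i) + 1) / s i)"

lemma EC1: "measure_pmf.expectation PP (\<lambda>d. real (card {p \<in> T. d p = j})) = (\<Sum>i\<in>V. real (x i) * Q i j)"
  unfolding count_E1[OF finT] by (rule sumT)

lemma EC2: "measure_pmf.expectation PP (\<lambda>d. (real (card {p \<in> T. d p = j}))^2) =
   (\<Sum>i\<in>V. real (x i) * Q i j)^2 + (\<Sum>i\<in>V. real (x i) * Q i j) - (\<Sum>i\<in>V. real (x i) * (Q i j)^2)"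
proof -
  have "measure_pmf.expectation PP (\<lambda>d. (real (card {p \<in> T. d p = j}))^2)
     = (\<Sum>p\<in>T. Q (fst p) j)^2 + (\<Sum>p\<in>T. Q (fst p) j) - (\<Sum>p\<in>T. (Q (fst p) j)^2)"
    by (rule count_E2[OF finT])
  also have "\<dots> = (\<Sum>i\<in>V. real (x i) * Q i j)^2 + (\<Sum>i\<in>V. real (x i) * Q i j) - (\<Sum>i\<in>V. real (x i) * (Q i j)^2)"
    by (simp only: sumT[of "\<lambda>i. Q i j"] sumT[of "\<lambda>i. (Q i j)^2"])
  finally show ?thesis .
qed

lemma ER: "measure_pmf.expectation (round_step V E s al x) Phi =
   (\<Sum>j\<in>V. ((\<Sum>i\<in>V. real (x i) * Q i j)^2 + 2 * (\<Sum>i\<in>V. real (x i) * Q i j)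
      - (\<Sum>i\<in>V. real (x i) * (Q i j)^2)) / s j)"
proof -
  have int: "integrable (measure_pmf PP) f" for f :: "_ \<Rightarrow> real"
    by (rule integrable_measure_pmf_finite[OF PP_fin])
  have ph: "Phi (\<lambda>j. card {p \<in> T. d p = j}) = (\<Sum>j\<in>V. ((real (card {p \<in> T. d p = j}))^2 + real (card {p \<in> T. d p = j})) / s j)" for d
    unfolding Phi_def by (intro sum.cong refl) (simp add: power2_eq_square distrib_left)
  have "measure_pmf.expectation (round_step V E s al x) Phi
     = measure_pmf.expectation PP (\<lambda>d. \<Sum>j\<in>V. ((real (card {p \<in> T. d p = j}))^2 + real (card {p \<in> T. d p = j})) / s j)"
    unfolding round_eq integral_map_pmf ph ..
  also have "\<dots> = (\<Sum>j\<in>V. measure_pmf.expectation PP (\<lambda>d. ((real (card {p \<in> T. d p = j}))^2 + real (card {p \<in> T. d p = j})) / s j))"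
    by (intro Bochner_Integration.integral_sum int)
  also have "\<dots> = (\<Sum>j\<in>V. (measure_pmf.expectation PP (\<lambda>d. (real (card {p \<in> T. d p = j}))^2)
        + measure_pmf.expectation PP (\<lambda>d. real (card {p \<in> T. d p = j}))) / s j)"
  proof (intro sum.cong refl)
    fix j
    show "measure_pmf.expectation PP (\<lambda>d. ((real (card {p \<in> T. d p = j}))^2 + real (card {p \<in> T. d p = j})) / s j)
      = (measure_pmf.expectation PP (\<lambda>d. (real (card {p \<in> T. d p = j}))^2)
        + measure_pmf.expectation PP (\<lambda>d. real (card {p \<in> T. d p = j}))) / s j"
      unfolding Bochner_Integration.integral_divide_zero by (subst Bochner_Integration.integral_add[OF int int]) (rule refl)
  qed
  also have "\<dots> = (\<Sum>j\<in>V. ((\<Sum>i\<in>V. real (x i) * Q i j)^2 + 2 * (\<Sum>i\<in>V. real (x i) * Q i j)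
      - (\<Sum>i\<in>V. real (x i) * (Q i j)^2)) / s j)"
    unfolding EC1 EC2 by (intro sum.cong refl) simp
  finally show ?thesis .
qed

lemma Psi_diff: assumes "y \<in> set_pmf (round_step V E s al x)"
  shows "Psi1 V s x - Psi1 V s y = Phi x - Phi y"
proof -
  obtain d where d: "d \<in> set_pmf PP" "y = (\<lambda>j. card {p \<in> T. d p = j})"
    using assms unfolding round_eq by auto
  have "real (\<Sum>i\<in>V. y i) = real (\<Sum>i\<in>V. x i)"
    using sum_cnt[OF d(1)] d(2) by simp
  then show ?thesis by (simp add: Psi1_def Phi_def Let_def)
qed

lemma drop_eq:
  assumes reach: "x \<in> set_pmf (proc V E s al \<mu>0 k)"
  shows "measure_pmf.expectation (cond_pmf (joint V E s al \<mu>0 k) {p. fst p = x})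
           (\<lambda>p. Psi1 V s (fst p) - Psi1 V s (snd p))
     = Phi x - measure_pmf.expectation (round_step V E s al x) Phi"
proof -
  have "cond_pmf (joint V E s al \<mu>0 k) {p. fst p = x} = map_pmf (\<lambda>y. (x, y)) (round_step V E s al x)"
    unfolding joint_def by (rule cond_joint_gen[OF reach])
  then have "measure_pmf.expectation (cond_pmf (joint V E s al \<mu>0 k) {p. fst p = x})
           (\<lambda>p. Psi1 V s (fst p) - Psi1 V s (snd p))
      = measure_pmf.expectation (round_step V E s al x) (\<lambda>y. Psi1 V s x - Psi1 V s y)"
    by simp
  also have "\<dots> = measure_pmf.expectation (round_step V E s al x) (\<lambda>y. Phi x - Phi y)"
    by (intro integral_cong_AE) (auto simp: AE_measure_pmf_iff Psi_diff)
  also have "\<dots> = Phi x - measure_pmf.expectation (round_step V E s al x) Phi"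
  proof -
    have fin: "finite (set_pmf (round_step V E s al x))" unfolding round_eq using PP_fin by simp
    show ?thesis
      by (subst Bochner_Integration.integral_diff) (auto intro: integrable_measure_pmf_finite[OF fin])
  qed
  finally show ?thesis .
qed

end


context lb begin

lemma g_zero: "\<not> act E s x i j \<Longrightarrow> g i j = 0" by (simp add: gf_def)
lemma g_act: "act E s x i j \<Longrightarrow> g i j = (load s x i - load s x j) / (al * real (dmax V E i j) * (1 / s i + 1 / s j))"
  by (simp add: gf_def)
lemma g_ii: "g i i = 0" using Eirr by (simp add: gf_def act_def)

lemma act_facts:
  assumes a: "act E s x i j"
  shows "i \<in> V" "j \<in> V" "0 < s i" "0 < s j" "1 \<le> s i" "1 \<le> s j" "s i \<le> smax V s" "s j \<le> smax V s"
    "0 < real (dmax V E i j)" "real (deg V E i) \<le> real (dmax V E i j)" "real (deg V E j) \<le> real (dmax V E i j)"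
    "real (dmax V E i j) \<le> real (maxdeg V E)"
    "load s x i - load s x j > 1 / s j"
proof -
  show ij: "i \<in> V" "j \<in> V" using act_E[OF a] EV by auto
  show "0 < s i" "0 < s j" "1 \<le> s i" "1 \<le> s j" "s i \<le> smax V s" "s j \<le> smax V s"
    using ij s_pos s_ge1 s_le_smax by auto
  show "real (deg V E i) \<le> real (dmax V E i j)" "real (deg V E j) \<le> real (dmax V E i j)"
    by (auto simp: dmax_def)
  then show "0 < real (dmax V E i j)" using deg_pos[OF act_E[OF a]] by linarith
  show "real (dmax V E i j) \<le> real (maxdeg V E)" using dmax_le ij by simp
  show "load s x i - load s x j > 1 / s j" using a by (simp add: act_def)
qed

lemma K0:
  assumes a: "act E s x i j"
  shows "load s x i - load s x j - 1 / s j \<ge> \<epsilon> / (s i * s j)"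
proof -
  have ij: "i \<in> V" "j \<in> V" using act_facts[OF a] by auto
  obtain ni :: nat where ni: "0 < ni" "s i = real ni * \<epsilon>" using speeds ij by blast
  obtain nj :: nat where nj: "0 < nj" "s j = real nj * \<epsilon>" using speeds ij by blast
  define z :: int where "z = int (x i) * int nj - (int (x j) + 1) * int ni"
  have key: "load s x i - load s x j - 1 / s j = real_of_int z / (real ni * real nj * \<epsilon>)"
    using ni nj eps by (simp add: load_def z_def field_simps)
  have den: "0 < real ni * real nj * \<epsilon>" using ni nj eps by simp
  have "0 < real_of_int z / (real ni * real nj * \<epsilon>)" using key act_facts(13)[OF a] by linarith
  then have "0 < real_of_int z" using den by (simp add: zero_less_divide_iff)
  then have "0 < z" by simp
  then have "1 \<le> z" by simp
  then have "1 \<le> real_of_int z" by simp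
  then have "1 / (real ni * real nj * \<epsilon>) \<le> real_of_int z / (real ni * real nj * \<epsilon>)"
    using den by (intro divide_right_mono) auto
  moreover have "\<epsilon> / (s i * s j) = 1 / (real ni * real nj * \<epsilon>)"
    using ni nj eps by (simp add: field_simps power2_eq_square)
  ultimately show ?thesis using key by simp
qed

lemma g_nonneg: "0 \<le> g i j"
proof (cases "act E s x i j")
  case True
  note f = act_facts[OF True]
  have "0 < al" using al_ge4 by linarith
  then have h1: "0 < al * real (dmax V E i j) * (1 / s i + 1 / s j)"
    using f eps smax_ge1 by (intro mult_pos_pos add_pos_pos divide_pos_pos) auto
  have h2: "0 < load s x i - load s x j" using act_diff_pos[OF True] .
  show ?thesis unfolding g_act[OF True] using divide_nonneg_pos[OF less_imp_le[OF h2] h1] .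
qed (simp add: g_zero)

lemma K1: "0 \<le> g i j * (load s x i - load s x j - 1 / s j)"
proof (cases "act E s x i j")
  case True
  then show ?thesis using g_nonneg act_facts(13)[OF True] by simp
qed (simp add: g_zero)

lemma K2: "g i j * g j i = 0"
proof (cases "act E s x i j \<and> act E s x j i")
  case True
  then have "0 < load s x i - load s x j" "0 < load s x j - load s x i" using act_diff_pos by blast+
  then show ?thesis by simp
qed (auto simp: g_zero)

lemma K5: "g i j \<noteq> 0 \<Longrightarrow> E i j" using g_zero act_E by blast

lemma D_al:
  assumes a: "act E s x i j"
  shows "(load s x i - load s x j) / al \<le> load s x i - load s x j - 1 / s j"
proof -
  note f = act_facts[OF a]
  define D where "D = load s x i - load s x j"
  define c where "c = 1 / s j"
  define t where "t = \<epsilon> / s i"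
  have c0: "0 < c" using f by (simp add: c_def)
  have Dge: "D \<ge> c * (1 + t)" using K0[OF a] f by (simp add: D_def c_def t_def field_simps)
  have t0: "0 < t" "t \<le> 1" using eps f by (auto simp: t_def divide_le_eq)
  have D0: "0 \<le> D" using Dge c0 t0 by (smt (verit) mult_pos_pos)
  have ialt: "1 / al \<le> t / 4"
  proof -
    have "1 / al = \<epsilon> / (4 * smax V s)" by simp
    also have "\<dots> \<le> \<epsilon> / (4 * s i)" using f eps by (intro divide_left_mono) auto
    finally show ?thesis by (simp add: t_def)
  qed
  have "c \<le> c * ((1 + t) * (1 - t / 4))"
  proof -
    have "1 \<le> (1 + t) * (1 - t / 4)" using t0 by (simp add: algebra_simps)
    then show ?thesis using c0 by simp
  qed
  also have "\<dots> = (c * (1 + t)) * (1 - t / 4)" by simp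
  also have "\<dots> \<le> D * (1 - 1 / al)"
    using Dge ialt t0 c0 D0 by (intro mult_mono) auto
  finally have "c \<le> D - D / al" by (simp add: algebra_simps)
  then show ?thesis by (simp add: D_def c_def)
qed

lemma K3: "(g i j)^2 * (real (deg V E i) / s i + real (deg V E j) / s j) \<le> g i j * (load s x i - load s x j - 1 / s j)"
proof (cases "act E s x i j")
  case True
  note f = act_facts[OF True]
  define D where "D = load s x i - load s x j"
  define S where "S = 1 / s i + 1 / s j"
  define m where "m = real (dmax V E i j)"
  have al0: "0 < al" using al_ge4 by linarith
  have S0: "0 < S" using f by (simp add: S_def add_pos_pos)
  have gd: "g i j = D / (al * m * S)" using g_act[OF True] by (simp add: D_def S_def m_def)
  have "real (deg V E i) / s i + real (deg V E j) / s j \<le> m / s i + m / s j"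
    using f by (intro add_mono divide_right_mono) (auto simp: m_def)
  also have "\<dots> = m * S" by (simp add: S_def algebra_simps)
  finally have dle: "real (deg V E i) / s i + real (deg V E j) / s j \<le> m * S" .
  have "(g i j)^2 * (real (deg V E i) / s i + real (deg V E j) / s j) \<le> (g i j)^2 * (m * S)"
    using dle by (intro mult_left_mono) auto
  also have "\<dots> = g i j * (D / al)"
  proof -
    have gen: "(D' / (A * m' * S'))^2 * (m' * S') = D' / (A * m' * S') * (D' / A)" if "0 < A" "0 < m'" "0 < S'" for D' A m' S' :: real
      using that by (simp add: power2_eq_square field_simps)
    show ?thesis unfolding gd by (rule gen[OF al0 _ S0]) (use f in \<open>simp add: m_def\<close>)
  qed
  also have "\<dots> \<le> g i j * (D - 1 / s j)"
    using D_al[OF True] g_nonneg by (intro mult_left_mono) (auto simp: D_def)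
  finally show ?thesis by (simp add: D_def)
qed (simp add: g_zero)

lemma K4:
  assumes a: "act E s x i j"
  shows "\<epsilon>^2 / (8 * real (maxdeg V E) * (smax V s)^3) \<le> g i j * (load s x i - load s x j - 1 / s j)"
proof -
  note f = act_facts[OF a]
  define D where "D = load s x i - load s x j"
  define S where "S = 1 / s i + 1 / s j"
  define m where "m = real (dmax V E i j)"
  define Dl where "Dl = real (maxdeg V E)"
  define sm where "sm = smax V s"
  have al0: "0 < al" using al_ge4 by linarith
  have S0: "0 < S" using f by (simp add: S_def add_pos_pos)
  have m0: "0 < m" "m \<le> Dl" using f by (auto simp: m_def Dl_def)
  have sm1: "1 \<le> sm" using smax_ge1 by (simp add: sm_def)
  have gd: "g i j = D / (al * m * S)" using g_act[OF a] by (simp add: D_def S_def m_def)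
  have D1: "1 / s j \<le> D" using f by (simp add: D_def)
  have D2: "\<epsilon> / (s i * s j) \<le> D - 1 / s j" using K0[OF a] by (simp add: D_def)
  have den0: "0 < al * m * S" using al0 m0 S0 by (intro mult_pos_pos)
  have "(1 / s j) * (\<epsilon> / (s i * s j)) \<le> D * (D - 1 / s j)"
    using D1 D2 f eps by (intro mult_mono) (auto intro: order_trans[OF _ D1])
  then have st: "(1 / s j) * (\<epsilon> / (s i * s j)) / (al * m * S) \<le> D * (D - 1 / s j) / (al * m * S)"
    by (rule divide_right_mono[OF _ less_imp_le[OF den0]])
  have gen: "a / b * c = a * c / b" for a b c :: real by simp
  have step1: "(1 / s j) * (\<epsilon> / (s i * s j)) / (al * m * S) \<le> g i j * (D - 1 / s j)"
    using st unfolding gd gen .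
  have "(1 / s j) * (\<epsilon> / (s i * s j)) / (al * m * S) = \<epsilon> / (s j * (s i + s j)) / (al * m)"
    using f by (simp add: S_def field_simps)
  also have "\<dots> \<ge> \<epsilon> / (sm * (2 * sm)) / (al * Dl)"
  proof -
    have a1: "\<epsilon> / (sm * (2 * sm)) \<le> \<epsilon> / (s j * (s i + s j))"
      using f eps by (intro divide_left_mono mult_mono) (auto simp: sm_def)
    have a2: "al * m \<le> al * Dl" using al0 m0 by (intro mult_left_mono) auto
    have a3: "0 < al * m" using al0 m0 by (intro mult_pos_pos)
    have a4: "0 \<le> \<epsilon> / (s j * (s i + s j))" using eps f by (intro divide_nonneg_pos) auto
    show ?thesis by (rule frac_le[OF a4 a1 a3 a2])
  qed
  also have "\<epsilon> / (sm * (2 * sm)) / (al * Dl) = \<epsilon>^2 / (8 * Dl * sm^3)"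
    using eps sm1 m0 by (simp add: sm_def field_simps power2_eq_square power3_eq_cube)
  finally show ?thesis using step1 by (simp add: Dl_def sm_def D_def)
qed

end


lemma CS_sum:
  fixes h :: "'a \<Rightarrow> real"
  assumes "finite N"
  shows "(\<Sum>k\<in>N. h k)^2 \<le> real (card N) * (\<Sum>k\<in>N. (h k)^2)"
proof -
  have "(\<Sum>k\<in>N. h k)^2 = (\<Sum>k\<in>N. \<Sum>l\<in>N. h k * h l)"
    by (simp add: power2_eq_square sum_product)
  also have "\<dots> \<le> (\<Sum>k\<in>N. \<Sum>l\<in>N. ((h k)^2 + (h l)^2) / 2)"
  proof (intro sum_mono)
    fix k l
    have "0 \<le> (h k - h l)^2" by simp
    then show "h k * h l \<le> ((h k)^2 + (h l)^2) / 2" by (simp add: power2_eq_square algebra_simps)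
  qed
  also have "\<dots> = (\<Sum>k\<in>N. \<Sum>l\<in>N. (h k)^2 / 2) + (\<Sum>k\<in>N. \<Sum>l\<in>N. (h l)^2 / 2)"
    by (simp add: add_divide_distrib sum.distrib)
  also have "(\<Sum>k\<in>N. \<Sum>l\<in>N. (h l)^2 / 2) = (\<Sum>k\<in>N. \<Sum>l\<in>N. (h k)^2 / 2)"
    by (rule sum.swap)
  also have "(\<Sum>k\<in>N. \<Sum>l\<in>N. (h k)^2 / 2) = real (card N) * (\<Sum>k\<in>N. (h k)^2) / 2"
    by (simp add: sum_distrib_left sum_divide_distrib algebra_simps)
  finally show ?thesis by simp
qed

context lb begin

definition "ee j = (\<Sum>i\<in>V. g i j) - (\<Sum>k\<in>V. g j k)"
definition "vv j = (\<Sum>i\<in>V. real (x i) * Q i j * (1 - Q i j))"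

lemma Q_nonneg: "0 \<le> Q i j" by simp
lemma Q_le1: "Q i j \<le> 1" by (rule pmf_le_1)

lemma Ma: assumes jV: "j \<in> V"
  shows "(\<Sum>i\<in>V. real (x i) * Q i j) = real (x j) + ee j"
proof -
  have r1: "(\<Sum>i\<in>V. real (x i) * Q i j) = real (x j) * Q j j + (\<Sum>i\<in>V-{j}. real (x i) * Q i j)"
    using finV jV by (simp add: sum.remove)
  have r2: "(\<Sum>i\<in>V-{j}. real (x i) * Q i j) = (\<Sum>i\<in>V-{j}. g i j)"
    by (intro sum.cong refl xQ) auto
  have r3: "(\<Sum>i\<in>V. g i j) = (\<Sum>i\<in>V-{j}. g i j)"
    using finV jV by (simp add: sum.remove g_ii)
  have r4: "Q j j = 1 - (\<Sum>k\<in>V-{j}. Q j k)"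
    using sumQ[OF jV] finV jV by (simp add: sum.remove)
  have r5: "real (x j) * (\<Sum>k\<in>V-{j}. Q j k) = (\<Sum>k\<in>V-{j}. g j k)"
    unfolding sum_distrib_left by (intro sum.cong refl xQ[OF jV]) auto
  have r6: "(\<Sum>k\<in>V. g j k) = (\<Sum>k\<in>V-{j}. g j k)"
    using finV jV by (simp add: sum.remove g_ii)
  show ?thesis unfolding r1 r2 ee_def r3 r6 r4 using r5 by (simp add: algebra_simps)
qed

lemma Vc: "(\<Sum>j\<in>V. vv j / s j) \<le> (\<Sum>i\<in>V. \<Sum>j\<in>V. g i j * (1 / s i + 1 / s j))"
proof -
  have "(\<Sum>j\<in>V. vv j / s j) = (\<Sum>j\<in>V. \<Sum>i\<in>V. real (x i) * Q i j * (1 - Q i j) / s j)"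
    unfolding vv_def by (simp add: sum_divide_distrib)
  also have "\<dots> = (\<Sum>i\<in>V. \<Sum>j\<in>V. real (x i) * Q i j * (1 - Q i j) / s j)" by (rule sum.swap)
  also have "\<dots> \<le> (\<Sum>i\<in>V. \<Sum>j\<in>V. g i j * (1 / s i + 1 / s j))"
  proof (rule sum_mono)
    fix i assume iV: "i \<in> V"
    have si: "0 < s i" using s_pos[OF iV] .
    have X0: "0 \<le> real (x i)" by simp
    have t1: "real (x i) * Q i i * (1 - Q i i) / s i \<le> (\<Sum>j\<in>V-{i}. g i j) / s i"
    proof -
      have "real (x i) * Q i i * (1 - Q i i) \<le> real (x i) * (1 - Q i i)"
      proof -
        have "real (x i) * (1 - Q i i) * Q i i \<le> real (x i) * (1 - Q i i) * 1"
          by (rule mult_left_mono) (use Q_le1[of i i] X0 in auto)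
        then show ?thesis by (simp add: mult_ac)
      qed
      also have "real (x i) * (1 - Q i i) = real (x i) * (\<Sum>j\<in>V-{i}. Q i j)"
        using sumQ[OF iV] finV iV by (simp add: sum.remove)
      also have "\<dots> = (\<Sum>j\<in>V-{i}. g i j)"
        unfolding sum_distrib_left by (intro sum.cong refl xQ[OF iV]) auto
      finally show ?thesis using si by (simp add: divide_right_mono)
    qed
    have t2: "real (x i) * Q i j * (1 - Q i j) / s j \<le> g i j / s j" if "j \<in> V-{i}" for j
    proof -
      have sj: "0 < s j" using that s_pos by blast
      have "real (x i) * Q i j * (1 - Q i j) \<le> real (x i) * Q i j"
        using Q_le1[of i j] X0 by (simp add: mult_left_le)
      also have "\<dots> = g i j" using xQ[OF iV] that by blast
      finally show ?thesis using sj by (simp add: divide_right_mono)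
    qed
    have "(\<Sum>j\<in>V. real (x i) * Q i j * (1 - Q i j) / s j)
        = real (x i) * Q i i * (1 - Q i i) / s i + (\<Sum>j\<in>V-{i}. real (x i) * Q i j * (1 - Q i j) / s j)"
      using finV iV by (simp add: sum.remove)
    also have "\<dots> \<le> (\<Sum>j\<in>V-{i}. g i j) / s i + (\<Sum>j\<in>V-{i}. g i j / s j)"
      using t1 t2 by (intro add_mono sum_mono) auto
    also have "\<dots> = (\<Sum>j\<in>V-{i}. g i j * (1 / s i + 1 / s j))"
      by (simp add: sum_divide_distrib sum.distrib algebra_simps)
    also have "\<dots> = (\<Sum>j\<in>V. g i j * (1 / s i + 1 / s j))"
      using finV iV by (simp add: sum.remove g_ii)
    finally show "(\<Sum>j\<in>V. real (x i) * Q i j * (1 - Q i j) / s j) \<le> (\<Sum>j\<in>V. g i j * (1 / s i + 1 / s j))" .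
  qed
  finally show ?thesis .
qed

lemma flow: "(\<Sum>j\<in>V. c j * ee j) = (\<Sum>i\<in>V. \<Sum>j\<in>V. g i j * (c j - c i))"
proof -
  have "(\<Sum>j\<in>V. c j * ee j) = (\<Sum>j\<in>V. \<Sum>i\<in>V. g i j * c j) - (\<Sum>j\<in>V. \<Sum>k\<in>V. g j k * c j)"
    unfolding ee_def by (simp add: right_diff_distrib sum_distrib_left sum_subtractf algebra_simps)
  also have "(\<Sum>j\<in>V. \<Sum>i\<in>V. g i j * c j) = (\<Sum>i\<in>V. \<Sum>j\<in>V. g i j * c j)" by (rule sum.swap)
  finally show ?thesis by (simp add: right_diff_distrib sum_subtractf)
qed

end


context lb begin

lemma g_off: assumes "k \<in> V" "\<not> E j k" shows "g j k = 0" "g k j = 0"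
proof -
  show "g j k = 0" using assms act_E g_zero by blast
  have "\<not> E k j" using assms Esym by blast
  then show "g k j = 0" using act_E g_zero by blast
qed

lemma Esq: assumes jV: "j \<in> V"
  shows "(ee j)^2 \<le> (\<Sum>k\<in>V. real (deg V E j) * ((g k j)^2 + (g j k)^2))"
proof -
  define N where "N = nbrs V E j"
  have NV: "N \<subseteq> V" unfolding N_def by (rule nbrs_sub)
  have finN: "finite N" unfolding N_def by (rule nbrs_fin)
  have out: "k \<in> V - N \<Longrightarrow> g j k = 0 \<and> g k j = 0" for k
    using g_off[of k j] by (auto simp: N_def nbrs_def)
  have "ee j = (\<Sum>k\<in>V. g k j - g j k)" unfolding ee_def by (simp add: sum_subtractf)
  also have "\<dots> = (\<Sum>k\<in>N. g k j - g j k)"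
    using out by (intro sum.mono_neutral_right[OF finV NV]) auto
  finally have e1: "ee j = (\<Sum>k\<in>N. g k j - g j k)" .
  have "(ee j)^2 \<le> real (card N) * (\<Sum>k\<in>N. (g k j - g j k)^2)"
    unfolding e1 by (rule CS_sum[OF finN])
  also have "(\<Sum>k\<in>N. (g k j - g j k)^2) = (\<Sum>k\<in>N. (g k j)^2 + (g j k)^2)"
  proof (intro sum.cong refl)
    fix k
    have "g k j * g j k = 0" using K2[of k j] .
    then show "(g k j - g j k)^2 = (g k j)^2 + (g j k)^2" by (simp add: power2_diff)
  qed
  also have "\<dots> = (\<Sum>k\<in>V. (g k j)^2 + (g j k)^2)"
    using out by (intro sum.mono_neutral_left[OF finV NV]) auto
  finally show ?thesis by (simp add: sum_distrib_left N_def deg_def)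
qed

lemma Equad: "(\<Sum>j\<in>V. (ee j)^2 / s j) \<le> (\<Sum>i\<in>V. \<Sum>j\<in>V. g i j * (load s x i - load s x j - 1 / s j))"
proof -
  have "(\<Sum>j\<in>V. (ee j)^2 / s j) \<le> (\<Sum>j\<in>V. (\<Sum>k\<in>V. real (deg V E j) * ((g k j)^2 + (g j k)^2)) / s j)"
  proof (rule sum_mono)
    fix j assume jV: "j \<in> V"
    show "(ee j)^2 / s j \<le> (\<Sum>k\<in>V. real (deg V E j) * ((g k j)^2 + (g j k)^2)) / s j"
      by (rule divide_right_mono[OF Esq[OF jV] less_imp_le[OF s_pos[OF jV]]])
  qed
  also have "\<dots> = (\<Sum>j\<in>V. \<Sum>k\<in>V. (g k j)^2 * (real (deg V E j) / s j))
        + (\<Sum>j\<in>V. \<Sum>k\<in>V. (g j k)^2 * (real (deg V E j) / s j))"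
  proof -
    have "(\<Sum>k\<in>V. real (deg V E j) * ((g k j)^2 + (g j k)^2)) / s j
       = (\<Sum>k\<in>V. (g k j)^2 * (real (deg V E j) / s j)) + (\<Sum>k\<in>V. (g j k)^2 * (real (deg V E j) / s j))" for j
    proof -
      have "(\<Sum>k\<in>V. real (deg V E j) * ((g k j)^2 + (g j k)^2)) / s j
         = (\<Sum>k\<in>V. real (deg V E j) * ((g k j)^2 + (g j k)^2) / s j)" by (rule sum_divide_distrib)
      also have "\<dots> = (\<Sum>k\<in>V. (g k j)^2 * (real (deg V E j) / s j) + (g j k)^2 * (real (deg V E j) / s j))"
        by (intro sum.cong refl) (simp add: algebra_simps add_divide_distrib)
      finally show ?thesis by (simp only: sum.distrib)
    qed
    then show ?thesis by (simp only: sum.distrib)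
  qed
  also have "(\<Sum>j\<in>V. \<Sum>k\<in>V. (g k j)^2 * (real (deg V E j) / s j))
        = (\<Sum>k\<in>V. \<Sum>j\<in>V. (g k j)^2 * (real (deg V E j) / s j))" by (rule sum.swap)
  also have "(\<Sum>k\<in>V. \<Sum>j\<in>V. (g k j)^2 * (real (deg V E j) / s j)) + (\<Sum>j\<in>V. \<Sum>k\<in>V. (g j k)^2 * (real (deg V E j) / s j))
      = (\<Sum>i\<in>V. \<Sum>j\<in>V. (g i j)^2 * (real (deg V E i) / s i + real (deg V E j) / s j))"
    by (simp add: sum.distrib algebra_simps)
  also have "\<dots> \<le> (\<Sum>i\<in>V. \<Sum>j\<in>V. g i j * (load s x i - load s x j - 1 / s j))"
    by (intro sum_mono K3)
  finally show ?thesis .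
qed

lemma vv_eq: assumes jV: "j \<in> V"
  shows "vv j = real (x j) + ee j - (\<Sum>i\<in>V. real (x i) * (Q i j)^2)"
proof -
  have "vv j = (\<Sum>i\<in>V. real (x i) * Q i j - real (x i) * (Q i j)^2)"
    unfolding vv_def by (intro sum.cong refl) (simp add: algebra_simps power2_eq_square)
  also have "\<dots> = (\<Sum>i\<in>V. real (x i) * Q i j) - (\<Sum>i\<in>V. real (x i) * (Q i j)^2)"
    by (rule sum_subtractf)
  finally show ?thesis using Ma[OF jV] by simp
qed

lemma drop_decomp:
  "Phi x - measure_pmf.expectation (round_step V E s al x) Phi =
   (\<Sum>j\<in>V. - ((2 * load s x j + 1 / s j) * ee j)) - (\<Sum>j\<in>V. (ee j)^2 / s j) - (\<Sum>j\<in>V. vv j / s j)"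
proof -
  have pt: "real (x j) * (real (x j) + 1) / s j -
      ((\<Sum>i\<in>V. real (x i) * Q i j)^2 + 2 * (\<Sum>i\<in>V. real (x i) * Q i j)
      - (\<Sum>i\<in>V. real (x i) * (Q i j)^2)) / s j
    = - ((2 * load s x j + 1 / s j) * ee j) - (ee j)^2 / s j - vv j / s j" if jV: "j \<in> V" for j
  proof -
    have sj: "s j \<noteq> 0" using s_pos[OF jV] by simp
    define X where "X = real (x j)"
    define W where "W = (\<Sum>i\<in>V. real (x i) * (Q i j)^2)"
    have gen: "X * (X + 1) / S - ((X + e)^2 + 2 * (X + e) - W) / S
       = - ((2 * (X / S) + 1 / S) * e) - e^2 / S - (X + e - W) / S" if "S \<noteq> 0" for S e :: real
      using that by (simp add: field_simps power2_eq_square)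
    show ?thesis unfolding Ma[OF jV] vv_eq[OF jV] load_def using gen[OF sj, of "ee j"]
      by (simp add: X_def W_def)
  qed
  have "Phi x - measure_pmf.expectation (round_step V E s al x) Phi
     = (\<Sum>j\<in>V. real (x j) * (real (x j) + 1) / s j -
      ((\<Sum>i\<in>V. real (x i) * Q i j)^2 + 2 * (\<Sum>i\<in>V. real (x i) * Q i j)
      - (\<Sum>i\<in>V. real (x i) * (Q i j)^2)) / s j)"
    unfolding ER Phi_def by (rule sum_subtractf[symmetric])
  also have "\<dots> = (\<Sum>j\<in>V. - ((2 * load s x j + 1 / s j) * ee j) - (ee j)^2 / s j - vv j / s j)"
    by (intro sum.cong refl pt)
  also have "\<dots> = (\<Sum>j\<in>V. - ((2 * load s x j + 1 / s j) * ee j)) - (\<Sum>j\<in>V. (ee j)^2 / s j) - (\<Sum>j\<in>V. vv j / s j)"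
    by (simp only: sum_subtractf)
  finally show ?thesis .
qed

lemma main_bound:
  assumes notNE: "\<not> is_NE E s x"
  shows "\<epsilon>^2 / (8 * real (maxdeg V E) * (smax V s)^3) \<le> Phi x - measure_pmf.expectation (round_step V E s al x) Phi"
proof -
  define c where "c = (\<lambda>j. 2 * load s x j + 1 / s j)"
  define F where "F = (\<lambda>i j. g i j * (load s x i - load s x j - 1 / s j))"
  have lin: "(\<Sum>j\<in>V. - ((2 * load s x j + 1 / s j) * ee j)) = (\<Sum>i\<in>V. \<Sum>j\<in>V. g i j * (c i - c j))"
  proof -
    have "(\<Sum>j\<in>V. - ((2 * load s x j + 1 / s j) * ee j)) = - (\<Sum>j\<in>V. c j * ee j)"
      by (simp add: c_def sum_negf)
    also have "\<dots> = - (\<Sum>i\<in>V. \<Sum>j\<in>V. g i j * (c j - c i))" by (simp only: flow)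
    also have "\<dots> = (\<Sum>i\<in>V. \<Sum>j\<in>V. g i j * (c i - c j))"
      by (simp add: sum_negf[symmetric] algebra_simps)
    finally show ?thesis .
  qed
  have "Phi x - measure_pmf.expectation (round_step V E s al x) Phi
     \<ge> (\<Sum>i\<in>V. \<Sum>j\<in>V. g i j * (c i - c j)) - (\<Sum>i\<in>V. \<Sum>j\<in>V. F i j)
        - (\<Sum>i\<in>V. \<Sum>j\<in>V. g i j * (1 / s i + 1 / s j))"
    unfolding drop_decomp lin F_def using Equad Vc by linarith
  also have "(\<Sum>i\<in>V. \<Sum>j\<in>V. g i j * (c i - c j)) - (\<Sum>i\<in>V. \<Sum>j\<in>V. F i j)
        - (\<Sum>i\<in>V. \<Sum>j\<in>V. g i j * (1 / s i + 1 / s j))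
      = (\<Sum>i\<in>V. \<Sum>j\<in>V. g i j * (c i - c j) - F i j - g i j * (1 / s i + 1 / s j))"
    by (simp only: sum_subtractf)
  also have "\<dots> = (\<Sum>i\<in>V. \<Sum>j\<in>V. F i j)"
    by (intro sum.cong refl) (simp add: F_def c_def algebra_simps)
  finally have lb: "(\<Sum>i\<in>V. \<Sum>j\<in>V. F i j) \<le> Phi x - measure_pmf.expectation (round_step V E s al x) Phi" .
  obtain a b where ab: "E a b" "load s x a - load s x b > 1 / s b"
    using notNE unfolding is_NE_def by (auto simp: not_le)
  have act: "act E s x a b" using ab by (simp add: act_def)
  have aV: "a \<in> V" "b \<in> V" using EV[OF ab(1)] by auto
  have Fnn: "0 \<le> F i j" for i j unfolding F_def by (rule K1)
  have "F a b \<le> (\<Sum>j\<in>V. F a j)"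
    using Fnn aV finV by (intro member_le_sum) auto
  also have "\<dots> \<le> (\<Sum>i\<in>V. \<Sum>j\<in>V. F i j)"
    using Fnn aV finV by (intro member_le_sum sum_nonneg) auto
  finally have "F a b \<le> (\<Sum>i\<in>V. \<Sum>j\<in>V. F i j)" .
  moreover have "\<epsilon>^2 / (8 * real (maxdeg V E) * (smax V s)^3) \<le> F a b"
    unfolding F_def by (rule K4[OF act])
  ultimately show ?thesis using lb by linarith
qed

end

theorem lemma25:
  fixes V :: "'v set" and E :: "'v \<Rightarrow> 'v \<Rightarrow> bool" and s :: "'v \<Rightarrow> real"
    and \<epsilon> :: real and \<mu>0 :: "('v \<Rightarrow> nat) pmf" and k :: nat and x :: "'v \<Rightarrow> nat"
  assumes finV: "finite V"
    and Esym: "\<And>i j. E i j \<Longrightarrow> E j i"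
    and Eirr: "\<And>i. \<not> E i i"
    and EV: "\<And>i j. E i j \<Longrightarrow> i \<in> V \<and> j \<in> V"
    and eps: "0 < \<epsilon>" "\<epsilon> \<le> 1"
    and speeds: "\<forall>i\<in>V. \<exists>n::nat. 0 < n \<and> s i = real n * \<epsilon>"
    and minspeed: "(\<exists>i\<in>V. s i = 1) \<and> (\<forall>i\<in>V. 1 \<le> s i)"
    and notNE: "\<not> is_NE E s x"
    and reach: "x \<in> set_pmf (proc V E s (4 * smax V s / \<epsilon>) \<mu>0 k)"
  shows "measure_pmf.expectation
           (cond_pmf (joint V E s (4 * smax V s / \<epsilon>) \<mu>0 k) {p. fst p = x})
           (\<lambda>p. Psi1 V s (fst p) - Psi1 V s (snd p))
         \<ge> \<epsilon>^2 / (8 * real (maxdeg V E) * (smax V s)^3)"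
proof -
  interpret L: lb V E s \<epsilon> x
    by (rule lb.intro[OF finV Esym Eirr EV eps(1) eps(2) speeds minspeed])
  have "measure_pmf.expectation
           (cond_pmf (joint V E s (4 * smax V s / \<epsilon>) \<mu>0 k) {p. fst p = x})
           (\<lambda>p. Psi1 V s (fst p) - Psi1 V s (snd p))
        = L.Phi x - measure_pmf.expectation (round_step V E s (4 * smax V s / \<epsilon>) x) L.Phi"
    by (rule L.drop_eq[OF reach])
  then show ?thesis using L.main_bound[OF notNE] by simp
qed

end
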